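(* Assume $W_{S,M}$ is a finite Weyl group, that $K=(k_{s,s'})$ is an integer matrix satisfying conditions (K), and that $e=\{s_+,s_-\}$ satisfies condition (B) with sequence $s_{j_0}=s_-,s_{j_1}=s_+,\dots,s_{j_n}$. Let $S'=S\setminus\{s_{j_n}\}$, $w=s_{j_1}\cdots s_{j_n}$, $\tau:W_{S'}\to W_{S/e,N}$ the isomorphism $\tau(s)=s$ for $s\notin\{s_{j_0},\dots,s_{j_n}\}$, $\tau(s_{j_\ell})=s_{j_{\ell+1}}$ ($1\le \ell\le n-1$), $\tau(s_{j_0})=s_0$, and $\sigma^1:V_{S',\mathbb Z}\to V_{S/e,\mathbb Z}$ given by $\alpha_s\mapsto\alpha_s$ for $s\notin\{s_{j_0},\dots,s_{j_n}\}$ and $\alpha_{s_{j_\ell}}\mapsto\sigma_{s_{j_1}}\cdots\sigma_{s_{j_n}}(\alpha_{s_{j_\ell}})$. Then $\sigma^1$ is a well-defined isomorphism of lattices, and for all $(\alpha,x)\in W^{\mathrm{aff}}_{S'}=V_{S',\mathbb Z}\rtimes W_{S'}$, \[ \phi^{\mathrm{aff}}(\sigma^1(\alpha),\tau(x))=(\sigma_w(\alpha),wxw^{-1})\in W^{\mathrm{aff}}_{S}. \]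
   Context: A Coxeter matrix on $S$ is a symmetric matrix $M=(m_{s,s'})$ with entries in $\mathbb Z_{\ge1}\sqcup\{\infty\}$, $m_{s,s'}=1$ iff $s=s'$; $W_{S,M}$ is generated by $S$ with relations $(ss')^{m_{s,s'}}=1$ for $m_{s,s'}\ne\infty$. Conditions (K) on a real matrix $K=(k_{s,s'})_{s,s'\in S}$: $k_{s,s}=-2$; $k_{s,s'}=0$ if $m_{s,s'}=2$; $k_{s,s'}>0$ if $m_{s,s'}\ge3$; $k_{s,s'}k_{s',s}=4\cos^2(\pi/m_{s,s'})$ if $m_{s,s'}\ne\infty$; $k_{s,s'}k_{s',s}\ge4$ if $m_{s,s'}=\infty$. Given $K$, $V_S=\bigoplus_{s\in S}\mathbb R\alpha_s$ and $\sigma_s(\alpha_{s'})=\alpha_{s'}+k_{s,s'}\alpha_s$ define a faithful representation $\sigma$ of $W_{S,M}$. When $K$ is integral, $V_{S,\mathbb Z}=\bigoplus_s\mathbb Z\alpha_s$ is stable and $W^{\mathrm{aff}}_{S}=V_{S,\mathbb Z}\rtimes W_{S,M}$ with product $(\alpha,x)(\beta,y)=(\alpha+\sigma_x\beta,xy)$. For $S'\subseteq S$, $W_{S'}$ is the subgroup generated by $S'$, $V_{S',\mathbb Z}=\bigoplus_{s\in S'}\mathbb Z\alpha_s$, and $W^{\mathrm{aff}}_{S'}=V_{S',\mathbb Z}\rtimes W_{S'}\subseteq W^{\mathrm{aff}}_S$. Edge contraction: $e=\{s_+,s_-\}$ with $m_{s_+,s_-}=3$; $S/e=(S\setminus\{s_+,s_-\})\sqcup\{s_0\}$;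 $N=(n_{s,s'})$ with $n_{s,s}=1$, $n_{s,s'}=m_{s,s'}$ for distinct $s,s'\ne s_0$, and for $s\ne s_0$: $n_{s,s_0}=m_{s,s_+}+m_{s,s_-}-2$ if $m_{s,s_+}=2$ or $m_{s,s_-}=2$, else $\infty$. $\phi:W_{S/e,N}\to W_{S,M}$ is $s\mapsto s$ ($s\ne s_0$), $s_0\mapsto s_+s_-s_+$. Put $\alpha_{s_0}=\alpha_{s_+}+\alpha_{s_-}$, $V_{S/e,\mathbb Z}=\bigoplus_{s\in S/e}\mathbb Z\alpha_s\subseteq V_{S,\mathbb Z}$, with $W_{S/e,N}$ acting by $\tilde\sigma_s(\alpha_{s'})=\alpha_{s'}+\tilde k_{s,s'}\alpha_s$, where $\tilde k_{s,s'}=k_{s,s'}$ for $s,s'\ne s_0$, $\tilde k_{s,s_0}=k_{s,s_+}+k_{s,s_-}$, $\tilde k_{s_0,s}=k_{s_+,s}+k_{s_-,s}$, $\tilde k_{s_0,s_0}=-2$. $W^{\mathrm{aff}}_{S/e}=V_{S/e,\mathbb Z}\rtimes W_{S/e,N}$ and $\phi^{\mathrm{aff}}(\alpha,x)=(\alpha,\phi(x))$. Condition (B): there exist $n\ge1$ and pairwise distinct $s_{j_0}=s_-,s_{j_1}=s_+,\dots,s_{j_n}\in S$ with $m_{s_{j_k},s_{j_{k+1}}}=3$ for $0\le k\le n-1$, and for every $1\le k\le n$ and every $s\in S$ different from $s_{j_k}$, $s_{j_{k-1}}$ and (if $k<n$) $s_{j_{k+1}}$, $m_{s_{j_k},s}=2$.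 *)

theory Defs
  imports Complex_Main "HOL-Library.Extended_Nat"
begin

definition coxeter_matrix :: "'a set \<Rightarrow> ('a \<Rightarrow> 'a \<Rightarrow> enat) \<Rightarrow> bool" where
  "coxeter_matrix S M \<longleftrightarrow>
     (\<forall>s\<in>S. \<forall>t\<in>S. M s t = M t s \<and> M s t \<ge> 1 \<and> (M s t = 1 \<longleftrightarrow> s = t))"

(* Words over S; the Coxeter group W_{S,M} is the set of words modulo the congruence
   generated by the relators (s s')^{m_{s,s'}} (m finite).  Since m_{s,s} = 1, s s = 1. *)
inductive cox_eq :: "'a set \<Rightarrow> ('a \<Rightarrow> 'a \<Rightarrow> enat) \<Rightarrow> 'a list \<Rightarrow> 'a list \<Rightarrow> bool"
  for S M where
  refl: "cox_eq S M w w"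
| rel: "s \<in> S \<Longrightarrow> t \<in> S \<Longrightarrow> M s t = enat m \<Longrightarrow>
        cox_eq S M (u @ concat (replicate m [s, t]) @ v) (u @ v)"
| sym: "cox_eq S M u v \<Longrightarrow> cox_eq S M v u"
| trans: "cox_eq S M u v \<Longrightarrow> cox_eq S M v w \<Longrightarrow> cox_eq S M u w"

definition coxeter_group :: "'a set \<Rightarrow> ('a \<Rightarrow> 'a \<Rightarrow> enat) \<Rightarrow> 'a list set set" where
  "coxeter_group S M =
     lists S // {(u, v). u \<in> lists S \<and> v \<in> lists S \<and> cox_eq S M u v}"

definition conditions_K :: "'a set \<Rightarrow> ('a \<Rightarrow> 'a \<Rightarrow> enat) \<Rightarrow> ('a \<Rightarrow> 'a \<Rightarrow> int) \<Rightarrow> bool" where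
  "conditions_K S M K \<longleftrightarrow>
     (\<forall>s\<in>S. K s s = -2) \<and>
     (\<forall>s\<in>S. \<forall>t\<in>S. M s t = 2 \<longrightarrow> K s t = 0) \<and>
     (\<forall>s\<in>S. \<forall>t\<in>S. M s t \<ge> 3 \<longrightarrow> K s t > 0) \<and>
     (\<forall>s\<in>S. \<forall>t\<in>S. \<forall>m::nat. M s t = enat m \<longrightarrow>
          real_of_int (K s t * K t s) = 4 * (cos (pi / real m))\<^sup>2) \<and>
     (\<forall>s\<in>S. \<forall>t\<in>S. M s t = \<infinity> \<longrightarrow> K s t * K t s \<ge> 4)"

definition lattice :: "'a set \<Rightarrow> ('a \<Rightarrow> int) set" where
  "lattice S = {v. \<forall>t. t \<notin> S \<longrightarrow> v t = 0}"

definition root :: "'a \<Rightarrow> 'a \<Rightarrow> int" where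
  "root s = (\<lambda>t. if t = s then 1 else 0)"

(* sigma_s(alpha_{s'}) = alpha_{s'} + k_{s,s'} alpha_s, extended linearly *)
definition refl_sigma :: "'a set \<Rightarrow> ('a \<Rightarrow> 'a \<Rightarrow> int) \<Rightarrow> 'a \<Rightarrow> ('a \<Rightarrow> int) \<Rightarrow> ('a \<Rightarrow> int)" where
  "refl_sigma S K s v = (\<lambda>t. v t + (if t = s then (\<Sum>u\<in>S. K s u * v u) else 0))"

definition sigma_word :: "'a set \<Rightarrow> ('a \<Rightarrow> 'a \<Rightarrow> int) \<Rightarrow> 'a list \<Rightarrow> ('a \<Rightarrow> int) \<Rightarrow> ('a \<Rightarrow> int)" where
  "sigma_word S K w = foldr (\<lambda>s f. refl_sigma S K s \<circ> f) w id"

(* S/e is modelled as  None (= s_0)  together with  Some s  for s \<in> S - {s_+, s_-} *)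
definition contracted_set :: "'a set \<Rightarrow> 'a \<Rightarrow> 'a \<Rightarrow> 'a option set" where
  "contracted_set S sp sm = insert None (Some ` (S - {sp, sm}))"

(* the inclusion V_{S/e,Z} \<subseteq> V_{S,Z}, with alpha_{s_0} = alpha_{s_+} + alpha_{s_-} *)
definition contr_emb :: "'a \<Rightarrow> 'a \<Rightarrow> ('a option \<Rightarrow> int) \<Rightarrow> ('a \<Rightarrow> int)" where
  "contr_emb sp sm b = (\<lambda>t. b (Some t) + (if t = sp \<or> t = sm then b None else 0))"

definition contracted_lattice :: "'a set \<Rightarrow> 'a \<Rightarrow> 'a \<Rightarrow> ('a \<Rightarrow> int) set" where
  "contracted_lattice S sp sm = contr_emb sp sm ` lattice (contracted_set S sp sm)"

definition phi_word :: "'a \<Rightarrow> 'a \<Rightarrow> 'a option list \<Rightarrow> 'a list" where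
  "phi_word sp sm y = concat (map (\<lambda>c. case c of None \<Rightarrow> [sp, sm, sp] | Some s \<Rightarrow> [s]) y)"

definition condition_B_seq :: "'a set \<Rightarrow> ('a \<Rightarrow> 'a \<Rightarrow> enat) \<Rightarrow> 'a \<Rightarrow> 'a \<Rightarrow> nat \<Rightarrow> (nat \<Rightarrow> 'a) \<Rightarrow> bool" where
  "condition_B_seq S M sp sm n j \<longleftrightarrow>
     n \<ge> 1 \<and> j 0 = sm \<and> j 1 = sp \<and> inj_on j {0..n} \<and> j ` {0..n} \<subseteq> S \<and>
     (\<forall>k<n. M (j k) (j (Suc k)) = 3) \<and>
     (\<forall>k\<in>{1..n}. \<forall>s\<in>S. s \<noteq> j k \<and> s \<noteq> j (k - 1) \<and> (k < n \<longrightarrow> s \<noteq> j (Suc k))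
          \<longrightarrow> M (j k) s = 2)"

definition sigma1 :: "'a set \<Rightarrow> ('a \<Rightarrow> 'a \<Rightarrow> int) \<Rightarrow> nat \<Rightarrow> (nat \<Rightarrow> 'a) \<Rightarrow> ('a \<Rightarrow> int) \<Rightarrow> ('a \<Rightarrow> int)" where
  "sigma1 S K n j a =
     (\<lambda>t. \<Sum>s\<in>S - {j n}. a s *
        (if s \<in> j ` {0..n} then sigma_word S K (map j [1..<Suc n]) (root s) t else root s t))"

end

theory Submission
  imports Defs
begin


lemma cox_cong: "cox_eq S M u v \<Longrightarrow> cox_eq S M (a@u@b) (a@v@b)"
proof (induction rule: cox_eq.induct)
  case (refl w) then show ?case by (rule cox_eq.refl)
next
  case (rel s t m u v)
  from cox_eq.rel[of s S t M m "a@u" "v@b"] rel(1,2,3) show ?case by simp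
next
  case (sym u v) then show ?case by (metis cox_eq.sym)
next
  case (trans u v w) then show ?case by (metis cox_eq.trans)
qed

lemma cox_cong': "cox_eq S M u v \<Longrightarrow> x = a@u@b \<Longrightarrow> y = a@v@b \<Longrightarrow> cox_eq S M x y"
  using cox_cong by blast

lemma cox_app: "cox_eq S M u u' \<Longrightarrow> cox_eq S M v v' \<Longrightarrow> cox_eq S M (u@v) (u'@v')"
  by (metis append.right_neutral append_Nil cox_cong cox_eq.trans)

lemma cox_inv: "s \<in> S \<Longrightarrow> M s s = 1 \<Longrightarrow> cox_eq S M [s,s] []"
  using cox_eq.rel[of s S s M 1 "[]" "[]"] by (simp add: one_enat_def)

lemma cox_comm: assumes "s \<in> S" "t \<in> S" "M s t = 2" "M s s = 1" "M t t = 1"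
  shows "cox_eq S M [s,t] [t,s]"
proof -
  have "M s t = enat 2" using assms by (simp add: numeral_eq_enat)
  from cox_eq.rel[of s S t M 2 "[]" "[t,s]"] assms(1,2) this
  have 1: "cox_eq S M [s,t,s,t,t,s] [t,s]" by (simp add: numeral_2_eq_2)
  have 2: "cox_eq S M [s,t,s,t,t,s] [s,t,s,s]"
    by (rule cox_cong'[OF cox_inv[of t S M, OF assms(2,5)], of _ "[s,t,s]" "[s]"]) auto
  have 3: "cox_eq S M [s,t,s,s] [s,t]"
    by (rule cox_cong'[OF cox_inv[of s S M, OF assms(1,4)], of _ "[s,t]" "[]"]) auto
  show ?thesis by (meson 1 2 3 cox_eq.sym cox_eq.trans)
qed

lemma cox_braid: assumes "s \<in> S" "t \<in> S" "M s t = 3" "M t t = 1"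
  shows "cox_eq S M [s,t,s,t,s] [t]"
proof -
  have "M s t = enat 3" using assms by (simp add: numeral_eq_enat)
  from cox_eq.rel[of s S t M 3 "[]" "[t]"] assms(1,2) this
  have 1: "cox_eq S M [s,t,s,t,s,t,t] [t]" by (simp add: numeral_3_eq_3)
  have 2: "cox_eq S M [s,t,s,t,s,t,t] [s,t,s,t,s]"
    by (rule cox_cong'[OF cox_inv[of t S M, OF assms(2,4)], of _ "[s,t,s,t,s]" "[]"]) auto
  show ?thesis by (meson 1 2 cox_eq.sym cox_eq.trans)
qed

lemma cox_cancel: "set w \<subseteq> S \<Longrightarrow> \<forall>s\<in>S. M s s = 1 \<Longrightarrow> cox_eq S M (w @ rev w) []"
proof (induction w)
  case Nil then show ?case by (simp add: cox_eq.refl)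
next
  case (Cons x w)
  have 1: "cox_eq S M ((x#w) @ rev (x#w)) [x,x]"
    by (rule cox_cong'[OF Cons.IH, of _ "[x]" "[x]"]) (use Cons.prems in auto)
  have "cox_eq S M [x,x] []" using Cons.prems by (intro cox_inv) auto
  then show ?case using 1 cox_eq.trans by blast
qed

lemma cox_cancel': "set w \<subseteq> S \<Longrightarrow> \<forall>s\<in>S. M s s = 1 \<Longrightarrow> cox_eq S M (rev w @ w) []"
  using cox_cancel[of "rev w" S M] by simp

lemma cox_commute_list: "\<forall>t\<in>set L. cox_eq S M [s,t] [t,s] \<Longrightarrow> cox_eq S M (s # L) (L @ [s])"
proof (induction L)
  case Nil then show ?case by (simp add: cox_eq.refl)
next
  case (Cons t L)
  have 1: "cox_eq S M (s#t#L) (t#s#L)"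
    by (rule cox_cong'[of S M "[s,t]" "[t,s]" _ "[]" L]) (use Cons.prems in auto)
  have 2: "cox_eq S M (t#s#L) (t#L@[s])"
    by (rule cox_cong'[of S M "s#L" "L@[s]" _ "[t]" "[]"]) (use Cons in auto)
  show ?case using 1 2 cox_eq.trans by fastforce
qed



definition pk :: "nat \<Rightarrow> (nat \<Rightarrow> 'a) \<Rightarrow> nat \<Rightarrow> 'a \<Rightarrow> 'a" where
  "pk n j k t = (if t \<in> j ` {k..n} then j (the_inv_into {0..n} j t - 1) else t)"

definition qk :: "nat \<Rightarrow> (nat \<Rightarrow> 'a) \<Rightarrow> 'a \<Rightarrow> 'a" where
  "qk n j t = (if t \<in> j ` {0..<n} then j (the_inv_into {0..n} j t + 1) else t)"

lemma pk_chain: "inj_on j {0..n} \<Longrightarrow> k \<le> m \<Longrightarrow> m \<le> n \<Longrightarrow> pk n j k (j m) = j (m - 1)"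
  unfolding pk_def by (auto simp: the_inv_into_f_f)

lemma pk_other: "t \<notin> j ` {k..n} \<Longrightarrow> pk n j k t = t"
  unfolding pk_def by auto

lemma pk_low: "inj_on j {0..n} \<Longrightarrow> m < k \<Longrightarrow> m \<le> n \<Longrightarrow> pk n j k (j m) = j m"
proof -
  assume a: "inj_on j {0..n}" "m < k" "m \<le> n"
  have "j m \<notin> j ` {k..n}"
  proof
    assume "j m \<in> j ` {k..n}"
    then obtain i where "i \<in> {k..n}" "j m = j i" by auto
    with a have "m = i" by (meson atLeastAtMost_iff inj_on_def le0 order_trans)
    with a \<open>i \<in> {k..n}\<close> show False by auto
  qed
  then show ?thesis by (rule pk_other)
qed

lemma qk_chain: "inj_on j {0..n} \<Longrightarrow> m < n \<Longrightarrow> qk n j (j m) = j (Suc m)"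
  unfolding qk_def by (auto simp: the_inv_into_f_f)

lemma qk_other: "t \<notin> j ` {0..<n} \<Longrightarrow> qk n j t = t"
  unfolding qk_def by auto

lemma sigma_word_Cons: "sigma_word S K (x#xs) v = refl_sigma S K x (sigma_word S K xs v)"
  by (simp add: sigma_word_def)

lemma sigma_word_Nil: "sigma_word S K [] v = v"
  by (simp add: sigma_word_def)

context
  fixes S :: "'a set" and M :: "'a \<Rightarrow> 'a \<Rightarrow> enat" and K :: "'a \<Rightarrow> 'a \<Rightarrow> int"
    and sp sm :: 'a and n :: nat and j :: "nat \<Rightarrow> 'a"
  assumes finS: "finite S"
    and coxM: "coxeter_matrix S M"
    and condK: "conditions_K S M K"
    and condB: "condition_B_seq S M sp sm n j"
begin

lemma injj: "inj_on j {0..n}" using condB by (simp add: condition_B_seq_def)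
lemma jS: "m \<le> n \<Longrightarrow> j m \<in> S" using condB by (auto simp: condition_B_seq_def)
lemma n1: "n \<ge> 1" using condB by (simp add: condition_B_seq_def)
lemma j0: "j 0 = sm" and j1: "j 1 = sp" using condB by (auto simp: condition_B_seq_def)
lemma jinj: "a \<le> n \<Longrightarrow> b \<le> n \<Longrightarrow> j a = j b \<longleftrightarrow> a = b"
  using injj by (auto simp: inj_on_def)

lemma Mdiag: "s \<in> S \<Longrightarrow> M s s = 1" using coxM by (simp add: coxeter_matrix_def)
lemma Msym: "s \<in> S \<Longrightarrow> t \<in> S \<Longrightarrow> M s t = M t s" using coxM by (simp add: coxeter_matrix_def)
lemma Kdiag: "s \<in> S \<Longrightarrow> K s s = -2" using condK by (simp add: conditions_K_def)

lemma M2: assumes "k \<in> {1..n}" "s \<in> S" "s \<noteq> j k" "s \<noteq> j (k-1)" "k < n \<longrightarrow> s \<noteq> j (Suc k)"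
  shows "M (j k) s = 2"
  using condB assms unfolding condition_B_seq_def by blast

lemma K0: assumes "k \<in> {1..n}" "s \<in> S" "s \<noteq> j k" "s \<noteq> j (k-1)" "k < n \<longrightarrow> s \<noteq> j (Suc k)"
  shows "K (j k) s = 0"
  using M2[OF assms] condK jS[of k] assms(1,2) unfolding conditions_K_def by auto

lemma K1: assumes "k < n" shows "K (j k) (j (Suc k)) = 1 \<and> K (j (Suc k)) (j k) = 1"
proof -
  have a: "j k \<in> S" "j (Suc k) \<in> S" using jS assms by auto
  have m: "M (j k) (j (Suc k)) = 3" using condB assms by (simp add: condition_B_seq_def)
  then have m': "M (j (Suc k)) (j k) = 3" using Msym a by metis
  have "(3::enat) \<ge> 3" by simp
  then have p: "K (j k) (j (Suc k)) > 0" "K (j (Suc k)) (j k) > 0"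
    using condK a m m' unfolding conditions_K_def by metis+
  have "M (j k) (j (Suc k)) = enat 3" using m by (simp add: numeral_eq_enat)
  then have "real_of_int (K (j k) (j (Suc k)) * K (j (Suc k)) (j k)) = 4 * (cos (pi / real 3))\<^sup>2"
    using condK a unfolding conditions_K_def by blast
  also have "\<dots> = 1" by (simp add: cos_60 power2_eq_square)
  finally have "K (j k) (j (Suc k)) * K (j (Suc k)) (j k) = 1" by linarith
  then show ?thesis using p pos_zmult_eq_1_iff by blast
qed

lemma shift:
  assumes aL: "a \<in> lattice S" and an: "a (j n) = 0"
  shows "1 \<le> k \<Longrightarrow> k \<le> Suc n \<Longrightarrow> sigma_word S K (map j [k..<Suc n]) a = (\<lambda>t. a (pk n j k t))"
proof (induction "Suc n - k" arbitrary: k)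
  case 0
  then have "k = Suc n" by simp
  then show ?case by (simp add: sigma_word_Nil pk_def)
next
  case (Suc d)
  then have kn: "k \<le> n" "1 \<le> k" by auto
  have IH: "sigma_word S K (map j [Suc k..<Suc n]) a = (\<lambda>t. a (pk n j (Suc k) t))"
    using Suc by auto
  define b where "b = (\<lambda>t. a (pk n j (Suc k) t))"
  have eq: "map j [k..<Suc n] = j k # map j [Suc k..<Suc n]" using kn by (simp only: upt_conv_Cons[of k "Suc n"] le_imp_less_Suc list.map)
  have sw: "sigma_word S K (map j [k..<Suc n]) a = refl_sigma S K (j k) b"
    unfolding eq sigma_word_Cons IH b_def ..
  have bk: "b (j k) = a (j k)" unfolding b_def using pk_low[OF injj, of k "Suc k"] kn by simp
  have bk1: "b (j (k-1)) = a (j (k-1))" unfolding b_def using pk_low[OF injj, of "k-1" "Suc k"] kn by simp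
  have bk2: "k < n \<Longrightarrow> b (j (Suc k)) = a (j k)" unfolding b_def using pk_chain[OF injj, of "Suc k" "Suc k"] by simp
  define N where "N = (if k < n then {j (k-1), j k, j (Suc k)} else {j (k-1), j k})"
  have NS: "N \<subseteq> S" unfolding N_def using jS kn by auto
  have z: "\<forall>u\<in>S - N. K (j k) u * b u = 0"
  proof
    fix u assume "u \<in> S - N"
    then show "K (j k) u * b u = 0" using K0[of k u] kn unfolding N_def
      by (cases "k < n") (auto split: if_splits simp: not_less le_antisym)
  qed
  have c: "(\<Sum>u\<in>S. K (j k) u * b u) = (\<Sum>u\<in>N. K (j k) u * b u)"
    using sum.mono_neutral_right[OF finS NS z] by simp
  have Kk1: "K (j k) (j (k-1)) = 1" using K1[of "k-1"] kn by simp
  have Kkk: "K (j k) (j k) = -2" using Kdiag jS kn by simp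
  have d1: "j (k-1) \<noteq> j k" using jinj[of "k-1" k] kn by auto
  have "(\<Sum>u\<in>S. K (j k) u * b u) + a (j k) = a (j (k-1))"
  proof (cases "k < n")
    case True
    have d2: "j (k-1) \<noteq> j (Suc k)" "j k \<noteq> j (Suc k)" using jinj[of "k-1" "Suc k"] jinj[of k "Suc k"] True by auto
    show ?thesis unfolding c N_def using True d1 d2 bk bk1 bk2 Kk1 Kkk K1[of k] by simp
  next
    case False
    then have "k = n" using kn by simp
    then show ?thesis unfolding c N_def using False d1 bk bk1 Kk1 Kkk an by simp
  qed
  moreover have "\<And>t. t \<noteq> j k \<Longrightarrow> pk n j (Suc k) t = pk n j k t"
  proof -
    fix t assume tk: "t \<noteq> j k"
    have "t \<in> j ` {Suc k..n} \<longleftrightarrow> t \<in> j ` {k..n}"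
      using tk by (auto, metis Suc_leI atLeastAtMost_iff image_eqI le_neq_implies_less)
    then show "pk n j (Suc k) t = pk n j k t" unfolding pk_def by simp
  qed
  ultimately show ?case unfolding sw
    using pk_chain[OF injj, of k k] kn bk
    by (auto simp: refl_sigma_def b_def algebra_simps)
qed

end


context
  fixes S :: "'a set" and M :: "'a \<Rightarrow> 'a \<Rightarrow> enat" and K :: "'a \<Rightarrow> 'a \<Rightarrow> int"
    and sp sm :: 'a and n :: nat and j :: "nat \<Rightarrow> 'a"
  assumes finS: "finite S"
    and coxM: "coxeter_matrix S M"
    and condK: "conditions_K S M K"
    and condB: "condition_B_seq S M sp sm n j"
begin

lemmas facts = injj[OF finS coxM condK condB] jS[OF finS coxM condK condB]
  n1[OF finS coxM condK condB] j0[OF finS coxM condK condB] j1[OF finS coxM condK condB]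
  jinj[OF finS coxM condK condB]

lemma sigw: assumes "a \<in> lattice (S - {j n})"
  shows "sigma_word S K (map j [1..<Suc n]) a = (\<lambda>t. a (pk n j 1 t))"
proof -
  have "a \<in> lattice S" "a (j n) = 0" using assms by (auto simp: lattice_def)
  then show ?thesis using shift[OF finS coxM condK condB] by simp
qed

lemma sig1: assumes aL: "a \<in> lattice (S - {j n})"
  shows "sigma1 S K n j a = (\<lambda>t. a (pk n j 1 t))"
proof
  fix t
  have tm: "(if s \<in> j ` {0..n} then sigma_word S K (map j [1..<Suc n]) (root s) t else root s t)
      = root s (pk n j 1 t)" if s: "s \<in> S - {j n}" for s
  proof (cases "s \<in> j ` {0..n}")
    case True
    have "root s \<in> lattice (S - {j n})" using s by (auto simp: lattice_def root_def)
    then show ?thesis using True sigw by simp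
  next
    case False
    show ?thesis
    proof (cases "t \<in> j ` {1..n}")
      case True
      then obtain m where m: "m \<in> {1..n}" "t = j m" by auto
      then have "pk n j 1 t = j (m - 1)" using pk_chain[OF facts(1)] by simp
      then show ?thesis using False m by (auto simp: root_def)
    next
      case f2: False
      then show ?thesis using False by (simp add: pk_other)
    qed
  qed
  have "sigma1 S K n j a t = (\<Sum>s\<in>S - {j n}. a s * root s (pk n j 1 t))"
    unfolding sigma1_def using tm by (intro sum.cong) auto
  also have "\<dots> = (\<Sum>s\<in>S - {j n}. if pk n j 1 t = s then a s else 0)"
    by (intro sum.cong) (auto simp: root_def)
  also have "\<dots> = a (pk n j 1 t)"
    using finS aL by (simp add: sum.delta' lattice_def)
  finally show "sigma1 S K n j a t = a (pk n j 1 t)" .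
qed

lemma contr_char: "contracted_lattice S sp sm = {v \<in> lattice S. v sp = v sm}"
proof -
  have spS: "sp \<in> S" "sm \<in> S" "sp \<noteq> sm"
    using facts(2)[of 0] facts(2)[of 1] facts(3,4,5) facts(6)[of 0 1] by auto
  show ?thesis
  proof
    show "contracted_lattice S sp sm \<subseteq> {v \<in> lattice S. v sp = v sm}"
    proof
      fix v assume "v \<in> contracted_lattice S sp sm"
      then obtain b where b: "b \<in> lattice (contracted_set S sp sm)" "v = contr_emb sp sm b"
        by (auto simp: contracted_lattice_def)
      have z: "b (Some t) = 0" if "t \<notin> S - {sp, sm}" for t
        using b(1) that by (auto simp: lattice_def contracted_set_def)
      have "v t = 0" if "t \<notin> S" for t using z[of t] that spS b(2) by (auto simp: contr_emb_def)
      moreover have "v sp = v sm" using z[of sp] z[of sm] b(2) by (simp add: contr_emb_def)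
      ultimately show "v \<in> {v \<in> lattice S. v sp = v sm}" by (simp add: lattice_def)
    qed
  next
    show "{v \<in> lattice S. v sp = v sm} \<subseteq> contracted_lattice S sp sm"
    proof
      fix v assume v: "v \<in> {v \<in> lattice S. v sp = v sm}"
      define b where "b = (\<lambda>x. case x of None \<Rightarrow> v sp | Some t \<Rightarrow> if t = sp \<or> t = sm then 0 else v t)"
      have "b \<in> lattice (contracted_set S sp sm)"
        using v by (auto simp: b_def lattice_def contracted_set_def split: option.splits)
      moreover have "contr_emb sp sm b = v"
        using v by (auto simp: b_def contr_emb_def)
      ultimately show "v \<in> contracted_lattice S sp sm"
        unfolding contracted_lattice_def by (metis image_eqI)
    qed
  qed
qed

lemma bij: "bij_betw (\<lambda>a t. a (pk n j 1 t)) (lattice (S - {j n})) (contracted_lattice S sp sm)"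
proof (rule bij_betw_byWitness[where f' = "\<lambda>v s. if s \<in> S - {j n} then v (qk n j s) else 0"])
  show "\<forall>a\<in>lattice (S - {j n}). (\<lambda>s. if s \<in> S - {j n} then a (pk n j 1 (qk n j s)) else 0) = a"
  proof (intro ballI ext)
    fix a s assume a: "a \<in> lattice (S - {j n})"
    show "(if s \<in> S - {j n} then a (pk n j 1 (qk n j s)) else 0) = a s"
    proof (cases "s \<in> S - {j n}")
      case False then show ?thesis using a by (auto simp: lattice_def)
    next
      case True
      show ?thesis
      proof (cases "s \<in> j ` {0..n}")
        case True
        then obtain m where m: "m \<le> n" "s = j m" by auto
        with \<open>s \<in> S - {j n}\<close> have "m < n" using le_neq_implies_less by fastforce
        then show ?thesis using \<open>s \<in> S - {j n}\<close> m qk_chain[OF facts(1)] pk_chain[OF facts(1), of 1 "Suc m"] by simp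
      next
        case False
        then have "s \<notin> j ` {0..<n}" "s \<notin> j ` {1..n}" by auto
        then show ?thesis using \<open>s \<in> S - {j n}\<close> by (simp add: qk_other pk_other)
      qed
    qed
  qed
next
  show "\<forall>v\<in>contracted_lattice S sp sm. (\<lambda>t. (\<lambda>s. if s \<in> S - {j n} then v (qk n j s) else 0) (pk n j 1 t)) = v"
  proof (intro ballI ext)
    fix v t assume "v \<in> contracted_lattice S sp sm"
    then have v: "v \<in> lattice S" "v sp = v sm" using contr_char by auto
    show "(\<lambda>s. if s \<in> S - {j n} then v (qk n j s) else 0) (pk n j 1 t) = v t"
    proof (cases "t \<in> j ` {0..n}")
      case False
      then have "t \<notin> j ` {1..n}" "t \<notin> j ` {0..<n}" by auto
      then show ?thesis using v False
        by (cases "t \<in> S") (auto simp: pk_other qk_other lattice_def)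
    next
      case True
      then obtain m where m: "m \<le> n" "t = j m" by auto
      show ?thesis
      proof (cases "m = 0")
        case True
        have p: "pk n j 1 t = j 0" using pk_low[OF facts(1), of 0 1] m True by simp
        have "j 0 \<noteq> j n" using facts(6)[of 0 n] facts(3) by simp
        then show ?thesis using p m True qk_chain[OF facts(1), of 0] facts(2)[of 0] facts(3,4,5) v by simp
      next
        case False
        have p: "pk n j 1 t = j (m - 1)" using pk_chain[OF facts(1), of 1 m] m False by simp
        have "j (m-1) \<noteq> j n" using facts(6)[of "m-1" n] m False by simp
        then show ?thesis using p m False qk_chain[OF facts(1), of "m-1"] facts(2)[of "m-1"] by simp
      qed
    qed
  qed
next
  show "(\<lambda>a t. a (pk n j 1 t)) ` lattice (S - {j n}) \<subseteq> contracted_lattice S sp sm"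
  proof
    fix v assume "v \<in> (\<lambda>a t. a (pk n j 1 t)) ` lattice (S - {j n})"
    then obtain a where a: "a \<in> lattice (S - {j n})" "v = (\<lambda>t. a (pk n j 1 t))" by auto
    have "v \<in> lattice S"
    proof -
      have "v t = 0" if "t \<notin> S" for t
      proof -
        have "t \<notin> j ` {1..n}" using that facts(2) by auto
        then show ?thesis using a that by (simp add: pk_other lattice_def)
      qed
      then show ?thesis by (simp add: lattice_def)
    qed
    moreover have "v sp = v sm"
      using a pk_chain[OF facts(1), of 1 1] pk_low[OF facts(1), of 0 1] facts(3,4,5) by simp
    ultimately show "v \<in> contracted_lattice S sp sm" using contr_char by auto
  qed
next
  show "(\<lambda>v s. if s \<in> S - {j n} then v (qk n j s) else 0) ` contracted_lattice S sp sm \<subseteq> lattice (S - {j n})"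
    by (auto simp: lattice_def)
qed

end


declare cox_eq.trans[trans]

context
  fixes S :: "'a set" and M :: "'a \<Rightarrow> 'a \<Rightarrow> enat" and K :: "'a \<Rightarrow> 'a \<Rightarrow> int"
    and sp sm :: 'a and n :: nat and j :: "nat \<Rightarrow> 'a" and tau :: "'a \<Rightarrow> 'a option"
  assumes finS: "finite S"
    and coxM: "coxeter_matrix S M"
    and condK: "conditions_K S M K"
    and condB: "condition_B_seq S M sp sm n j"
    and tau0: "tau (j 0) = None"
    and tau_chain: "\<forall>l\<in>{1..<n}. tau (j l) = Some (j (Suc l))"
    and tau_other: "\<forall>s\<in>S - {j n}. s \<notin> j ` {0..n} \<longrightarrow> tau s = Some s"
begin

lemmas facts4 = injj[OF finS coxM condK condB] jS[OF finS coxM condK condB]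
  n1[OF finS coxM condK condB] j0[OF finS coxM condK condB] j1[OF finS coxM condK condB]
  jinj[OF finS coxM condK condB] Mdiag[OF finS coxM condK condB] Msym[OF finS coxM condK condB]

lemma cmt: assumes "k \<in> {1..n}" "s \<in> S" "s \<noteq> j k" "s \<noteq> j (k-1)" "k < n \<longrightarrow> s \<noteq> j (Suc k)"
  shows "cox_eq S M [s, j k] [j k, s]"
proof -
  have "M (j k) s = 2" using M2[OF finS coxM condK condB assms] .
  then have "M s (j k) = 2" using facts4(8)[of s "j k"] assms facts4(2)[of k] by simp
  then show ?thesis using cox_comm[of s S "j k" M] assms facts4(2)[of k] facts4(7) by simp
qed

lemma ccmt: assumes "a \<le> n" "k \<in> {1..n}" "a \<noteq> k" "a + 1 \<noteq> k" "k + 1 \<noteq> a"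
  shows "cox_eq S M [j a, j k] [j k, j a]"
proof (rule cmt)
  show "j a \<noteq> j (k - 1)" using facts4(6)[of a "k-1"] assms by auto
  show "k < n \<longrightarrow> j a \<noteq> j (Suc k)" using facts4(6)[of a "Suc k"] assms by auto
qed (use assms facts4(2) facts4(6)[of a k] in auto)

abbreviation "w \<equiv> map j [1..<Suc n]"

lemma wS: "set w \<subseteq> S" using facts4(2) by auto
lemma Md: "\<forall>s\<in>S. M s s = 1" using facts4(7) by auto

lemma letter: assumes s: "s \<in> S - {j n}"
  shows "cox_eq S M (phi_word sp sm [tau s]) (w @ [s] @ rev w)"
proof (cases "s \<in> j ` {0..n}")
  case False
  have c: "\<forall>t\<in>set w. cox_eq S M [s,t] [t,s]"
  proof
    fix t assume "t \<in> set w"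
    then have "t \<in> j ` {1..<Suc n}" by (simp only: set_map set_upt)
    then obtain k where k: "k \<in> {1..n}" "t = j k" by (auto simp: atLeastLessThanSuc_atLeastAtMost)
    show "cox_eq S M [s,t] [t,s]" unfolding k(2) using False s k
      by (intro cmt) (auto simp: image_iff)
  qed
  have "cox_eq S M (w @ [s] @ rev w) (s # w @ rev w)"
    by (rule cox_cong'[OF cox_eq.sym[OF cox_commute_list[OF c]], of _ "[]" "rev w"]) auto
  also have "cox_eq S M (s # w @ rev w) [s]"
    by (rule cox_cong'[OF cox_cancel[of w S M, OF wS Md], of _ "[s]" "[]"]) auto
  finally have "cox_eq S M (w @ [s] @ rev w) [s]" .
  then show ?thesis using tau_other s False by (simp add: phi_word_def cox_eq.sym)
next
  case True
  then obtain m where m: "m \<le> n" "s = j m" by auto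
  with s have mn: "m < n" using le_neq_implies_less by fastforce
  show ?thesis
  proof (cases "m = 0")
    case True
    define w2 where "w2 = map j [Suc 1..<Suc n]"
    have weq: "w = j 1 # w2"
    proof -
      have "[1..<Suc n] = 1 # [Suc 1..<Suc n]" by (rule upt_conv_Cons) (use facts4(3) in simp)
      then show ?thesis unfolding w2_def by (simp only: list.map)
    qed
    have c: "\<forall>t\<in>set w2. cox_eq S M [j 0,t] [t,j 0]"
      unfolding w2_def by (auto intro!: ccmt)
    have "cox_eq S M (w @ [s] @ rev w) ([j 1] @ (j 0 # w2) @ (rev w2 @ [j 1]))"
      unfolding weq m True
      by (rule cox_cong'[OF cox_eq.sym[OF cox_commute_list[OF c]], of _ "[j 1]" "rev w2 @ [j 1]"]) auto
    also have "cox_eq S M ([j 1] @ (j 0 # w2) @ (rev w2 @ [j 1])) [j 1, j 0, j 1]"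
      by (rule cox_cong'[OF cox_cancel[of w2 S M, OF _ Md], of _ "[j 1, j 0]" "[j 1]"])
        (use facts4(2) in \<open>auto simp: w2_def\<close>)
    finally have "cox_eq S M (w @ [s] @ rev w) [j 1, j 0, j 1]" .
    then show ?thesis using tau0 m True facts4(4,5) by (simp add: phi_word_def cox_eq.sym)
  next
    case False
    define A where "A = map j [1..<m]"
    define B where "B = map j [Suc (Suc m)..<Suc n]"
    have "[1..<Suc n] = [1..<m] @ [m..<Suc n]" using upt_add_eq_append[of 1 m "Suc n - m"] False mn
      by (simp del: upt_Suc)
    also have "[m..<Suc n] = m # Suc m # [Suc (Suc m)..<Suc n]" using mn
      by (simp del: upt_Suc add: upt_conv_Cons)
    finally have weq: "w = A @ [j m, j (Suc m)] @ B" unfolding A_def B_def by simp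
    have AS: "set A \<subseteq> S" "set B \<subseteq> S" unfolding A_def B_def using facts4(2) mn by auto
    have cB: "\<forall>t\<in>set B. cox_eq S M [j m,t] [t,j m]"
      unfolding B_def using mn by (auto intro!: ccmt)
    have cA: "\<forall>t\<in>set A. cox_eq S M [j (Suc m),t] [t,j (Suc m)]"
      unfolding A_def using mn by (auto intro!: ccmt)
    have M3: "M (j m) (j (Suc m)) = 3" using condB mn by (simp add: condition_B_seq_def)
    have "cox_eq S M (w @ [s] @ rev w) ((A @ [j m, j (Suc m)]) @ (j m # B) @ (rev B @ [j (Suc m), j m] @ rev A))"
      unfolding weq m
      by (rule cox_cong'[OF cox_eq.sym[OF cox_commute_list[OF cB]], of _ "A @ [j m, j (Suc m)]" "rev B @ [j (Suc m), j m] @ rev A"]) auto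
    also have "cox_eq S M ((A @ [j m, j (Suc m)]) @ (j m # B) @ (rev B @ [j (Suc m), j m] @ rev A))
        (A @ [j m, j (Suc m), j m, j (Suc m), j m] @ rev A)"
      by (rule cox_cong'[OF cox_cancel[of B S M, OF AS(2) Md], of _ "A @ [j m, j (Suc m), j m]" "[j (Suc m), j m] @ rev A"]) auto
    also have "cox_eq S M (A @ [j m, j (Suc m), j m, j (Suc m), j m] @ rev A) (A @ [j (Suc m)] @ rev A)"
      by (rule cox_cong'[OF cox_braid[of "j m" S "j (Suc m)" M]]) (use facts4(2,7) mn M3 in auto)
    also have "cox_eq S M (A @ [j (Suc m)] @ rev A) ([j (Suc m)] @ A @ rev A)"
      by (rule cox_cong'[OF cox_eq.sym[OF cox_commute_list[OF cA]], of _ "[]" "rev A"]) auto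
    also have "cox_eq S M ([j (Suc m)] @ A @ rev A) [j (Suc m)]"
      by (rule cox_cong'[OF cox_cancel[of A S M, OF AS(1) Md], of _ "[j (Suc m)]" "[]"]) auto
    finally have "cox_eq S M (w @ [s] @ rev w) [j (Suc m)]" .
    then show ?thesis using tau_chain m False mn by (simp add: phi_word_def cox_eq.sym)
  qed
qed

lemma words: "x \<in> lists (S - {j n}) \<Longrightarrow> cox_eq S M (phi_word sp sm (map tau x)) (w @ x @ rev w)"
proof (induction x)
  case Nil
  then show ?case using cox_cancel[of w S M, OF wS Md] by (simp add: phi_word_def cox_eq.sym)
next
  case (Cons s x)
  have "phi_word sp sm (map tau (s#x)) = phi_word sp sm [tau s] @ phi_word sp sm (map tau x)"
    by (simp add: phi_word_def)
  then have "cox_eq S M (phi_word sp sm (map tau (s#x))) ((w @ [s] @ rev w) @ (w @ x @ rev w))"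
    using cox_app[OF letter Cons.IH] Cons.prems by simp
  also have "cox_eq S M ((w @ [s] @ rev w) @ (w @ x @ rev w)) (w @ (s # x) @ rev w)"
    by (rule cox_cong'[OF cox_cancel'[of w S M, OF wS Md], of _ "w @ [s]" "x @ rev w"]) auto
  finally show ?case .
qed

end
theorem mainTheorem4:
  fixes S :: "'a set" and M :: "'a \<Rightarrow> 'a \<Rightarrow> enat" and K :: "'a \<Rightarrow> 'a \<Rightarrow> int"
    and sp sm :: 'a and n :: nat and j :: "nat \<Rightarrow> 'a" and tau :: "'a \<Rightarrow> 'a option"
  assumes finS: "finite S"
    and coxM: "coxeter_matrix S M"
    and finW: "finite (coxeter_group S M)"
    and condK: "conditions_K S M K"
    and condB: "condition_B_seq S M sp sm n j"
    and tau0: "tau (j 0) = None"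
    and tau_chain: "\<forall>l\<in>{1..<n}. tau (j l) = Some (j (Suc l))"
    and tau_other: "\<forall>s\<in>S - {j n}. s \<notin> j ` {0..n} \<longrightarrow> tau s = Some s"
  shows "bij_betw (sigma1 S K n j) (lattice (S - {j n})) (contracted_lattice S sp sm)
     \<and> (\<forall>a\<in>lattice (S - {j n}). \<forall>x\<in>lists (S - {j n}).
          sigma1 S K n j a = sigma_word S K (map j [1..<Suc n]) a
          \<and> cox_eq S M (phi_word sp sm (map tau x))
               (map j [1..<Suc n] @ x @ rev (map j [1..<Suc n])))"
  proof
  show "bij_betw (sigma1 S K n j) (lattice (S - {j n})) (contracted_lattice S sp sm)"
    using bij_betw_cong[of "lattice (S - {j n})" "sigma1 S K n j" "\<lambda>a t. a (pk n j 1 t)"]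
      bij[OF finS coxM condK condB] sig1[OF finS coxM condK condB] by auto
  show "\<forall>a\<in>lattice (S - {j n}). \<forall>x\<in>lists (S - {j n}).
          sigma1 S K n j a = sigma_word S K (map j [1..<Suc n]) a
          \<and> cox_eq S M (phi_word sp sm (map tau x))
               (map j [1..<Suc n] @ x @ rev (map j [1..<Suc n]))"
    using sig1[OF finS coxM condK condB] sigw[OF finS coxM condK condB]
      words[OF finS coxM condK condB tau0 tau_chain tau_other] by auto
qed

end
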